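(* Consider the system $\dot\theta_i=\omega_i-\frac{\kappa}{N}\sum_{j=1}^N(1+\cos\theta_j)\sin\theta_i$, $i=1,\dots,N$. For an equilibrium $\Theta$ let $R=\frac1N\sum_j(1+\cos\theta_j)$. (a) If $\kappa>0$, then any equilibrium whose order parameter $R$ satisfies $NR(1-R)+\frac{\sum_i\omega_i^2}{N\kappa^2R^2}>0$ is linearly unstable; in particular any equilibrium with $0<R<1$ is linearly unstable. (b) If $\kappa<0$, then any equilibrium whose order parameter satisfies $NR(1-R)+\frac{\sum_i\omega_i^2}{N\kappa^2R^2}<0$ is linearly unstable.
   Context: An equilibrium is a point where all right-hand sides vanish; it is linearly unstable if the Jacobian matrix of the vector field at that point has an eigenvalue with positive real part. The conditions implicitly require $R\neq0$. *)

theory Defs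
  imports "HOL-Analysis.Analysis"
begin

definition vfield :: "real \<Rightarrow> real^'n \<Rightarrow> real^'n \<Rightarrow> real^'n" where
  "vfield \<kappa> \<omega> \<theta> = (\<chi> i. \<omega> $ i - (\<kappa> / real CARD('n)) *
      (\<Sum>j\<in>UNIV. 1 + cos (\<theta> $ j)) * sin (\<theta> $ i))"

definition order_param :: "real^'n \<Rightarrow> real" where
  "order_param \<theta> = (\<Sum>j\<in>UNIV. 1 + cos (\<theta> $ j)) / real CARD('n)"

definition is_equilibrium :: "(real^'n \<Rightarrow> real^'n) \<Rightarrow> real^'n \<Rightarrow> bool" where
  "is_equilibrium F x \<longleftrightarrow> F x = 0"

definition linearly_unstable :: "(real^'n \<Rightarrow> real^'n) \<Rightarrow> real^'n \<Rightarrow> bool" where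
  "linearly_unstable F x \<longleftrightarrow>
     (\<exists>(\<mu>::complex) (v::complex^'n). v \<noteq> 0 \<and> 0 < Re \<mu> \<and>
        (\<chi> i k. complex_of_real (jacobian F (at x) $ i $ k)) *v v = \<mu> *s v)"

end

theory Submission
  imports Defs
begin

lemma nth_deriv: "((\<lambda>x::real^'n. x $ j) has_derivative (\<lambda>h. h $ j)) F"
  using bounded_linear_vec_nth by (rule bounded_linear.has_derivative[OF _ has_derivative_ident])

lemma sum_if_delta_mult: fixes i :: "'a::finite" shows "(\<Sum>k\<in>UNIV. (if i = k then c else 0) * (f k::real)) = c * f i"
proof -
  have "(\<Sum>k\<in>UNIV. (if i = k then c else 0) * (f k::real)) = (\<Sum>k\<in>UNIV. if i = k then c * f k else 0)"
    by (rule sum.cong) auto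
  then show ?thesis by simp
qed

definition Jm :: "real \<Rightarrow> real^'n \<Rightarrow> real^'n^'n" where
  "Jm \<kappa> \<theta> = (\<chi> i k. (if i = k then - (\<kappa> / real CARD('n)) * (\<Sum>j\<in>UNIV. 1 + cos (\<theta> $ j)) * cos (\<theta> $ i) else 0)
      + (\<kappa> / real CARD('n)) * sin (\<theta> $ i) * sin (\<theta> $ k))"

lemma comp_deriv:
  fixes \<theta> :: "real^'n"
  shows
  "((\<lambda>x. vfield \<kappa> \<omega> x $ i) has_derivative (\<lambda>h. (Jm \<kappa> \<theta> *v h) $ i)) (at \<theta>)"
proof -
  have "((\<lambda>x. vfield \<kappa> \<omega> x $ i) has_derivative
     (\<lambda>h. 0 - ((\<kappa> / real CARD('n)) * (\<Sum>j\<in>UNIV. - sin (\<theta> $ j) * h $ j) * sin (\<theta> $ i)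
          + (\<kappa> / real CARD('n)) * (\<Sum>j\<in>UNIV. 1 + cos (\<theta> $ j)) * (cos (\<theta> $ i) * h $ i)))) (at \<theta>)"
    unfolding vfield_def vec_lambda_beta
    apply (rule derivative_eq_intros nth_deriv refl | simp)+
    apply (simp add: fun_eq_iff ac_simps)
    done
  moreover have "\<And>h. (Jm \<kappa> \<theta> *v h) $ i = 0 - ((\<kappa> / real CARD('n)) * (\<Sum>j\<in>UNIV. - sin (\<theta> $ j) * h $ j) * sin (\<theta> $ i)
          + (\<kappa> / real CARD('n)) * (\<Sum>j\<in>UNIV. 1 + cos (\<theta> $ j)) * (cos (\<theta> $ i) * h $ i))"
  proof -
    fix h :: "real^'n"
    have "(Jm \<kappa> \<theta> *v h) $ i = (\<Sum>k\<in>UNIV. (if i = k then - (\<kappa> / real CARD('n)) * (\<Sum>j\<in>UNIV. 1 + cos (\<theta> $ j)) * cos (\<theta> $ i) else 0) * h $ k)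
      + (\<Sum>k\<in>UNIV. (\<kappa> / real CARD('n)) * sin (\<theta> $ i) * sin (\<theta> $ k) * h $ k)"
      unfolding Jm_def matrix_vector_mult_def by (simp add: algebra_simps sum.distrib)
    also have "\<dots> = - (\<kappa> / real CARD('n)) * (\<Sum>j\<in>UNIV. 1 + cos (\<theta> $ j)) * cos (\<theta> $ i) * h $ i
      + (\<kappa> / real CARD('n)) * sin (\<theta> $ i) * (\<Sum>k\<in>UNIV. sin (\<theta> $ k) * h $ k)"
      unfolding sum_if_delta_mult[where f="\<lambda>k. h $ k"] by (simp add: sum_distrib_left ac_simps)
    finally show "(Jm \<kappa> \<theta> *v h) $ i = 0 - ((\<kappa> / real CARD('n)) * (\<Sum>j\<in>UNIV. - sin (\<theta> $ j) * h $ j) * sin (\<theta> $ i)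
          + (\<kappa> / real CARD('n)) * (\<Sum>j\<in>UNIV. 1 + cos (\<theta> $ j)) * (cos (\<theta> $ i) * h $ i))"
      by (simp add: sum_negf algebra_simps)
  qed
  ultimately show ?thesis by simp
qed
lemma sym_inner:
  fixes A :: "real^'n^'n"
  assumes sym: "\<And>i k. A$i$k = A$k$i"
  shows "x \<bullet> (A *v y) = y \<bullet> (A *v x)"
proof -
  have "x \<bullet> (A *v y) = (\<Sum>i\<in>UNIV. \<Sum>k\<in>UNIV. x$i * A$i$k * y$k)"
    by (simp add: inner_vec_def matrix_vector_mult_def sum_distrib_left ac_simps)
  also have "\<dots> = (\<Sum>k\<in>UNIV. \<Sum>i\<in>UNIV. x$i * A$i$k * y$k)" by (rule sum.swap)
  also have "\<dots> = y \<bullet> (A *v x)"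
    by (simp add: inner_vec_def matrix_vector_mult_def sum_distrib_left ac_simps sym)
  finally show ?thesis .
qed

lemma quad_zero:
  fixes a b :: real
  assumes "\<And>t. 2*t*a + t^2*b \<le> 0"
  shows "a = 0"
proof (rule ccontr)
  assume "a \<noteq> 0"
  define c where "c = \<bar>b\<bar> + 1"
  define t where "t = a / c"
  have pos: "c > 0" unfolding c_def by simp
  have "2*t*a + t^2*b = a^2 / c^2 * (2*c + b)"
    unfolding t_def using pos by (simp add: field_simps power2_eq_square)
  moreover have "a^2 / c^2 > 0" using \<open>a \<noteq> 0\<close> pos by simp
  moreover have "2*c + b > 0" unfolding c_def by (cases "b \<ge> 0") auto
  ultimately have "2*t*a + t^2*b > 0" by (metis mult_pos_pos)
  with assms[of t] show False by simp
qed

lemma sym_pos_eig: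
  fixes A :: "real^'n^'n"
  assumes sym: "\<And>i k. A$i$k = A$k$i" and pos: "A$i0$i0 > 0"
  shows "\<exists>v l. v \<noteq> 0 \<and> l > 0 \<and> A *v v = l *\<^sub>R v"
proof -
  define q where "q x = x \<bullet> (A *v x)" for x
  have cq: "continuous_on (sphere 0 1) q"
    unfolding q_def by (intro continuous_intros continuous_on_compose2[OF matrix_vector_mult_linear_continuous_on[of UNIV A]]) auto
  have "compact (sphere (0::real^'n) 1)" by simp
  moreover have "sphere (0::real^'n) 1 \<noteq> {}" by simp
  ultimately obtain v where v: "v \<in> sphere 0 1" and vmax: "\<And>x. x \<in> sphere 0 1 \<Longrightarrow> q x \<le> q v"
    using continuous_attains_sup[OF _ _ cq] by blast
  define l where "l = q v"
  have nv: "norm v = 1" using v by simp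
  have vv: "v \<bullet> v = 1" using nv by (simp add: dot_square_norm)
  have scale: "q (c *\<^sub>R x) = c^2 * q x" for c x
    unfolding q_def by (simp add: matrix_vector_mult_scaleR power2_eq_square)
  have bound: "q x \<le> l * (x \<bullet> x)" for x
  proof (cases "x = 0")
    case True then show ?thesis by (simp add: q_def)
  next
    case False
    then have nx: "norm x > 0" by simp
    have "(1/norm x) *\<^sub>R x \<in> sphere 0 1" using nx by simp
    then have "q ((1/norm x) *\<^sub>R x) \<le> l" using vmax l_def by blast
    then have "q x / (norm x)^2 \<le> l" unfolding scale by (simp add: power_divide)
    then have "q x \<le> l * (norm x)^2" using nx by (simp add: divide_le_eq)
    then show ?thesis by (simp add: dot_square_norm)
  qed
  have "q (axis i0 1) = A$i0$i0"
    by (simp add: q_def inner_commute[of "axis i0 1"] cart_eq_inner_axis[symmetric] matrix_vector_mult_basis column_def)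
  then have lpos: "l > 0" using bound[of "axis i0 1"] pos by (simp add: inner_axis_axis)
  define w where "w = A *v v - l *\<^sub>R v"
  have wv: "w \<bullet> v = 0" unfolding w_def l_def q_def by (simp add: inner_diff_left inner_commute[of "A *v v" v] vv)
  have "2*t*(w \<bullet> (A *v v)) + t^2*(q w - l * (w \<bullet> w)) \<le> 0" for t
  proof -
    have "q (v + t *\<^sub>R w) = q v + 2*t*(w \<bullet> (A *v v)) + t^2 * q w"
      unfolding q_def using sym_inner[OF sym, of v w]
      by (simp add: matrix_vector_right_distrib matrix_vector_mult_scaleR inner_add_left inner_add_right power2_eq_square algebra_simps)
    moreover have "(v + t *\<^sub>R w) \<bullet> (v + t *\<^sub>R w) = 1 + t^2 * (w \<bullet> w)"
      using wv vv by (simp add: inner_add_left inner_add_right inner_commute power2_eq_square)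
    ultimately show ?thesis using bound[of "v + t *\<^sub>R w"] unfolding l_def by (simp add: algebra_simps)
  qed
  then have a0: "w \<bullet> (A *v v) = 0" by (rule quad_zero)
  have "w \<bullet> w = 0" using a0 wv by (simp add: w_def inner_diff_left inner_diff_right)
  then have "w = 0" by simp
  then have "A *v v = l *\<^sub>R v" unfolding w_def by simp
  moreover have "v \<noteq> 0" using nv by auto
  ultimately show ?thesis using lpos by blast
qed

lemma basis_axis:
  fixes b :: "real^'n"
  assumes "b \<in> Basis" obtains i where "b = axis i 1"
proof -
  have "b \<in> (\<Union>i. \<Union>u\<in>(Basis::real set). {axis i u})" using assms by (simp only: Basis_vec_def)
  then show ?thesis using that by auto
qed

lemma vf_deriv:
  fixes \<theta> :: "real^'n"
  shows "(vfield \<kappa> \<omega> has_derivative (\<lambda>h. Jm \<kappa> \<theta> *v h)) (at \<theta>)"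
proof -
  have h: "((\<lambda>x. vfield \<kappa> \<omega> x \<bullet> b) has_derivative (\<lambda>h. (Jm \<kappa> \<theta> *v h) \<bullet> b)) (at \<theta>)"
    if bB: "b \<in> Basis" for b :: "real^'n"
  proof -
    obtain i where b: "b = axis i 1" using basis_axis[OF bB] by blast
    have e1: "(\<lambda>x. vfield \<kappa> \<omega> x \<bullet> b) = (\<lambda>x. vfield \<kappa> \<omega> x $ i)"
      unfolding b by (simp only: inner_axis real_inner_1_right)
    have e2: "(\<lambda>h. (Jm \<kappa> \<theta> *v h) \<bullet> b) = (\<lambda>h. (Jm \<kappa> \<theta> *v h) $ i)"
      unfolding b by (simp only: inner_axis real_inner_1_right)
    show ?thesis unfolding e1 e2 by (rule comp_deriv)
  qed
  show ?thesis using has_derivative_componentwise_within[of "vfield \<kappa> \<omega>" "\<lambda>h. Jm \<kappa> \<theta> *v h" \<theta> UNIV] h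
    by blast
qed

lemma jac_eq:
  fixes \<theta> :: "real^'n"
  shows "jacobian (vfield \<kappa> \<omega>) (at \<theta>) = Jm \<kappa> \<theta>"
proof -
  have "frechet_derivative (vfield \<kappa> \<omega>) (at \<theta>) = (\<lambda>h. Jm \<kappa> \<theta> *v h)"
    using frechet_derivative_at[OF vf_deriv] by metis
  then show ?thesis unfolding jacobian_def by (simp only: matrix_of_matrix_vector_mul)
qed

lemma unstable_if_diag_pos:
  fixes \<theta> :: "real^'n"
  assumes "(\<Sum>i\<in>UNIV. Jm \<kappa> \<theta> $ i $ i) > 0"
  shows "linearly_unstable (vfield \<kappa> \<omega>) \<theta>"
proof -
  have "\<exists>i0. Jm \<kappa> \<theta> $ i0 $ i0 > 0"
  proof (rule ccontr)
    assume "\<not> ?thesis"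
    then have "\<forall>i. Jm \<kappa> \<theta> $ i $ i \<le> 0" by (simp add: not_less)
    then have "(\<Sum>i\<in>UNIV. Jm \<kappa> \<theta> $ i $ i) \<le> 0" by (simp add: sum_nonpos)
    with assms show False by simp
  qed
  then obtain i0 where i0: "Jm \<kappa> \<theta> $ i0 $ i0 > 0" by blast
  have sym: "\<And>i k. Jm \<kappa> \<theta> $ i $ k = Jm \<kappa> \<theta> $ k $ i" by (simp add: Jm_def)
  obtain v l where v: "v \<noteq> 0" "l > 0" "Jm \<kappa> \<theta> *v v = l *\<^sub>R v"
    using sym_pos_eig[OF sym i0] by blast
  define cv :: "complex^'n" where "cv = (\<chi> i. complex_of_real (v $ i))"
  have "cv \<noteq> 0" using v(1) by (auto simp: cv_def vec_eq_iff)
  moreover have "(\<chi> i k. complex_of_real (jacobian (vfield \<kappa> \<omega>) (at \<theta>) $ i $ k)) *v cv = complex_of_real l *s cv"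
  proof -
    have c: "(\<Sum>k\<in>UNIV. Jm \<kappa> \<theta> $ i $ k * v $ k) = l * v $ i" for i
      using arg_cong[OF v(3), of "\<lambda>x. x $ i"] by (simp add: matrix_vector_mult_def)
    have d: "(\<Sum>j\<in>UNIV. complex_of_real (Jm \<kappa> \<theta> $ i $ j) * complex_of_real (v $ j)) = complex_of_real l * complex_of_real (v $ i)" for i
    proof -
      have "(\<Sum>j\<in>UNIV. complex_of_real (Jm \<kappa> \<theta> $ i $ j) * complex_of_real (v $ j)) = complex_of_real (\<Sum>j\<in>UNIV. Jm \<kappa> \<theta> $ i $ j * v $ j)"
        by simp
      also have "\<dots> = complex_of_real (l * v $ i)" using c by simp
      finally show ?thesis by simp
    qed
    show ?thesis unfolding jac_eq
      by (simp add: vec_eq_iff cv_def matrix_vector_mult_def d)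
  qed
  ultimately show ?thesis unfolding linearly_unstable_def using v(2)
    by (intro exI[of _ "complex_of_real l"] exI[of _ cv]) simp
qed

theorem proposition5p5:
  fixes \<kappa> :: real and \<omega> \<Theta> :: "real^'n"
  assumes eq: "is_equilibrium (vfield \<kappa> \<omega>) \<Theta>"
  defines "R \<equiv> order_param \<Theta>"
  defines "N \<equiv> real CARD('n)"
  shows "(\<kappa> > 0 \<longrightarrow>
            ((N * R * (1 - R) + (\<Sum>i\<in>UNIV. (\<omega> $ i)\<^sup>2) / (N * \<kappa>\<^sup>2 * R\<^sup>2) > 0
                \<longrightarrow> linearly_unstable (vfield \<kappa> \<omega>) \<Theta>)
             \<and> (0 < R \<and> R < 1 \<longrightarrow> linearly_unstable (vfield \<kappa> \<omega>) \<Theta>)))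
       \<and> (\<kappa> < 0 \<longrightarrow>
            (N * R * (1 - R) + (\<Sum>i\<in>UNIV. (\<omega> $ i)\<^sup>2) / (N * \<kappa>\<^sup>2 * R\<^sup>2) < 0
                \<longrightarrow> linearly_unstable (vfield \<kappa> \<omega>) \<Theta>))"
proof -
  define E where "E = N * R * (1 - R) + (\<Sum>i\<in>UNIV. (\<omega> $ i)\<^sup>2) / (N * \<kappa>\<^sup>2 * R\<^sup>2)"
  define S where "S = (\<Sum>j\<in>UNIV. 1 + cos (\<Theta> $ j))"
  have Npos: "N > 0" unfolding N_def by simp
  have SR: "S = N * R" unfolding S_def R_def N_def order_param_def using Npos N_def by simp
  have om: "\<omega> $ i = \<kappa> * R * sin (\<Theta> $ i)" for i
  proof -
    have "vfield \<kappa> \<omega> \<Theta> $ i = 0" using eq by (simp add: is_equilibrium_def)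
    then have "\<omega> $ i = (\<kappa> / N) * S * sin (\<Theta> $ i)" by (simp add: vfield_def S_def N_def)
    then show ?thesis using SR Npos by simp
  qed
  have R0: "R = 0 \<Longrightarrow> E = 0" unfolding E_def by simp
  have diag: "Jm \<kappa> \<Theta> $ i $ i = - (\<kappa> / N) * S * cos (\<Theta> $ i) + (\<kappa> / N) * (sin (\<Theta> $ i))^2" for i
    by (simp add: Jm_def S_def N_def power2_eq_square)
  have trace: "(\<Sum>i\<in>UNIV. Jm \<kappa> \<Theta> $ i $ i) = \<kappa> * E" if "R \<noteq> 0" "\<kappa> \<noteq> 0"
  proof -
    have sc: "(\<Sum>i\<in>UNIV. cos (\<Theta> $ i)) = N * R - N"
      using SR unfolding S_def N_def by (simp add: sum.distrib)
    have ss: "(\<Sum>i\<in>UNIV. (\<omega> $ i)\<^sup>2) = \<kappa>^2 * R^2 * (\<Sum>i\<in>UNIV. (sin (\<Theta> $ i))^2)"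
      by (simp add: om power_mult_distrib sum_distrib_left)
    have "(\<Sum>i\<in>UNIV. Jm \<kappa> \<Theta> $ i $ i) = - (\<kappa> / N) * S * (\<Sum>i\<in>UNIV. cos (\<Theta> $ i)) + (\<kappa> / N) * (\<Sum>i\<in>UNIV. (sin (\<Theta> $ i))^2)"
      unfolding diag sum.distrib by (simp add: sum_distrib_left sum_negf)
    also have "\<dots> = \<kappa> * E"
      unfolding E_def ss sc SR using that Npos by (simp add: field_simps power2_eq_square)
    finally show ?thesis .
  qed
  have Enn: "E \<ge> N * R * (1 - R)"
  proof -
    have a: "0 \<le> N * \<kappa>\<^sup>2 * R\<^sup>2" using Npos by simp
    have b: "0 \<le> (\<Sum>i\<in>UNIV. (\<omega> $ i)\<^sup>2)" by (simp add: sum_nonneg)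
    show ?thesis unfolding E_def using divide_nonneg_nonneg[OF b a] by linarith
  qed
  show ?thesis
    unfolding E_def[symmetric]
  proof (intro conjI impI)
    assume k: "\<kappa> > 0" and E: "E > 0"
    then have "R \<noteq> 0" using R0 by auto
    then show "linearly_unstable (vfield \<kappa> \<omega>) \<Theta>"
      using trace k E by (intro unstable_if_diag_pos) simp
  next
    assume k: "\<kappa> > 0" and r: "0 < R \<and> R < 1"
    then have "E > 0" using Enn Npos by (smt (verit) mult_pos_pos)
    then show "linearly_unstable (vfield \<kappa> \<omega>) \<Theta>"
      using trace k r by (intro unstable_if_diag_pos) simp
  next
    assume k: "\<kappa> < 0" and E: "E < 0"
    then have "R \<noteq> 0" using R0 by auto
    then show "linearly_unstable (vfield \<kappa> \<omega>) \<Theta>"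
      using trace k E by (intro unstable_if_diag_pos) (simp add: mult_neg_neg)
  qed
qed

end
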